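(* Let $n\ge2$ and $q\ge1$ be integers, and for $\theta=(\theta_1,\dots,\theta_{n-1})\in\mathbb{R}^{n-1}$ let $$\Phi(\theta)=\binom n2^{-1}\Big(\sum_{j=1}^{n-1}\cos\theta_j+\sum_{j=2}^{n-1}\sum_{k=1}^{j-1}\cos(\theta_j-\theta_k)\Big).$$ Then for every $\theta\in[-\pi,\pi]^{n-1}$ with $\|\theta\|_\infty>1/\sqrt q$, $$\Phi(\theta)\le1-\frac1{25nq}.$$
   Context: $\Phi$ is the characteristic function of one increment of the $1\times n$ Diaconis–Gangolli walk, restricted to the first $n-1$ coordinates. *)

theory Defs
  imports "HOL-Analysis.Analysis"
begin

text \<open>Characteristic function of one increment of the 1 x n Diaconis-Gangolli walk,
restricted to the first n-1 coordinates. The vector theta in R^(n-1) is represented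
as a function nat => real, of which only the values at indices 1..n-1 are used.\<close>
definition Phi :: "nat \<Rightarrow> (nat \<Rightarrow> real) \<Rightarrow> real" where
  "Phi n \<theta> = (1 / real (n choose 2)) *
     ((\<Sum>j=1..n-1. cos (\<theta> j)) + (\<Sum>j=2..n-1. \<Sum>k=1..j-1. cos (\<theta> j - \<theta> k)))"

end

theory Submission
  imports Defs
begin

lemma D_sym:
  fixes g :: "nat \<Rightarrow> nat \<Rightarrow> real"
  assumes "\<And>j k. g j k = g k j" "\<And>j. g j j = 0"
  shows "(\<Sum>j=2..N. \<Sum>k=1..j-1. g j k) = (1/2) * (\<Sum>j=1..N. \<Sum>k=1..N. g j k)"
proof (induction N)
  case 0
  then show ?case by simp
next
  case (Suc N)
  show ?case
  proof (cases "N = 0")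
    case True
    then show ?thesis using assms by simp
  next
    case False
    have L: "(\<Sum>j=2..Suc N. \<Sum>k=1..j-1. g j k) = (\<Sum>j=2..N. \<Sum>k=1..j-1. g j k) + (\<Sum>k=1..N. g (Suc N) k)"
      using False by (simp add: sum.cl_ivl_Suc)
    have R: "(\<Sum>j=1..Suc N. \<Sum>k=1..Suc N. g j k) = (\<Sum>j=1..N. \<Sum>k=1..N. g j k) + (\<Sum>j=1..N. g j (Suc N))
        + (\<Sum>k=1..N. g (Suc N) k) + g (Suc N) (Suc N)"
      by (simp add: sum.cl_ivl_Suc sum.distrib)
    have "(\<Sum>j=1..N. g j (Suc N)) = (\<Sum>k=1..N. g (Suc N) k)" using assms(1) by simp
    then show ?thesis using L R Suc assms(2) by simp
  qed
qed

lemma count_pairs: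
  "(\<Sum>j=2..N. \<Sum>k=1..j-1. (1::real)) = real N * (real N - 1) / 2"
proof (induction N)
  case 0
  then show ?case by simp
next
  case (Suc N)
  then show ?case
    by (cases "N = 0") (auto simp: sum.cl_ivl_Suc algebra_simps)
qed

lemma key_ineq:
  fixes a b :: real
  shows "(1 - cos b) / 2 \<le> (1 - cos a) + (1 - cos (b - a))"
proof -
  define u where "u = a/2"
  define v where "v = (b-a)/2"
  have e1: "a = 2 * u" "b - a = 2 * v" "b = 2 * (u + v)" by (simp_all add: u_def v_def field_simps)
  have ca: "cos a = 1 - 2 * sin u ^ 2" using cos_double_sin[of u] e1(1) by simp
  have cba: "cos (b - a) = 1 - 2 * sin v ^ 2" using cos_double_sin[of v] e1(2) by simp
  have cb: "cos b = 1 - 2 * sin (u+v) ^ 2" using cos_double_sin[of "u+v"] e1(3) by simp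
  have s: "sin (u+v) = sin u * cos v + cos u * sin v" by (simp add: sin_add)
  have c1: "cos v ^ 2 \<le> 1" "cos u ^ 2 \<le> 1"
    using sin_cos_squared_add[of v] sin_cos_squared_add[of u]
      zero_le_power2[of "sin u"] zero_le_power2[of "sin v"] by linarith+
  have "(sin u * cos v + cos u * sin v)^2 \<le> 2 * ((sin u * cos v)^2 + (cos u * sin v)^2)"
    by (smt (verit) sum_squares_ge_zero power2_eq_square left_diff_distrib right_diff_distrib
        zero_le_power2 power2_diff)
  also have "\<dots> \<le> 2 * (sin u ^2 + sin v^2)"
  proof -
    have "(sin u * cos v)^2 \<le> sin u ^ 2"
      using c1 by (simp add: power_mult_distrib mult_left_le)
    moreover have "(cos u * sin v)^2 \<le> sin v ^ 2"
      using c1 by (simp add: power_mult_distrib mult_left_le_one_le)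
    ultimately show ?thesis by simp
  qed
  finally have "sin (u+v)^2 \<le> 2 * (sin u ^2 + sin v^2)" using s by simp
  then show ?thesis using ca cba cb by simp
qed

lemma sin_half_lower:
  fixes z :: real
  assumes "0 \<le> z" "z \<le> 1/2"
  shows "z / 2 \<le> sin z"
proof (cases "z = 0")
  case True then show ?thesis by simp
next
  case False
  then have "0 < z" using assms by simp
  from MVT2[OF this, of sin cos] obtain \<xi> where xi: "0 < \<xi>" "\<xi> < z" "sin z - sin 0 = (z - 0) * cos \<xi>"
    by (auto intro: DERIV_sin)
  have "cos (pi/3) \<le> cos \<xi>"
    using xi assms pi_gt3 by (intro cos_monotone_0_pi_le) auto
  then have "1/2 \<le> cos \<xi>" by (simp add: cos_60)
  then show ?thesis using xi \<open>0 < z\<close> by (simp add: mult_left_mono[of "1/2" "cos \<xi>" z, simplified])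
qed

lemma cos_lower:
  fixes y :: real
  assumes "0 \<le> y" "y \<le> 1"
  shows "y^2 / 8 \<le> 1 - cos y"
proof -
  have c: "cos y = 1 - 2 * sin (y/2) ^ 2" using cos_double_sin[of "y/2"] by simp
  have "y/4 \<le> sin (y/2)" using sin_half_lower[of "y/2"] assms by simp
  then have "(y/4)^2 \<le> sin (y/2) ^ 2" using assms by (intro power_mono) auto
  then show ?thesis using c by (simp add: power_divide)
qed

theorem mainTheorem11:
  fixes n q :: nat and \<theta> :: "nat \<Rightarrow> real"
  assumes "n \<ge> 2" and "q \<ge> 1"
    and "\<forall>j\<in>{1..n-1}. -pi \<le> \<theta> j \<and> \<theta> j \<le> pi"
    and "\<exists>j\<in>{1..n-1}. \<bar>\<theta> j\<bar> > 1 / sqrt (real q)"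
  shows "Phi n \<theta> \<le> 1 - 1 / (25 * real n * real q)"
proof -
  define N where "N = n - 1"
  have N1: "N \<ge> 1" and nN: "real n = real N + 1" using assms(1) by (auto simp: N_def)
  obtain m where m: "m \<in> {1..N}" "\<bar>\<theta> m\<bar> > 1 / sqrt (real q)" using assms(4) N_def by auto
  define h where "h j k = 1 - cos (\<theta> j - \<theta> k)" for j k
  define A where "A = (\<Sum>j=1..N. 1 - cos (\<theta> j))"
  define B where "B = (\<Sum>j=2..N. \<Sum>k=1..j-1. h j k)"
  define C where "C = real (n choose 2)"
  have hsym: "h j k = h k j" for j k unfolding h_def by (metis cos_minus minus_diff_eq)
  have hnn: "h j k \<ge> 0" for j k unfolding h_def by simp
  have C: "C = (real N + 1) * real N / 2"
    unfolding C_def using assms(1) nN by (simp add: choose_two real_of_nat_div of_nat_diff N_def)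
  have "(real N + 1) * real N > 0" using N1 by simp
  then have Cpos: "C > 0" using C by simp
  have s1: "(\<Sum>j=1..N. cos (\<theta> j)) = real N - A"
    unfolding A_def by (simp add: sum_subtractf)
  have s2: "(\<Sum>j=2..N. \<Sum>k=1..j-1. cos (\<theta> j - \<theta> k)) = real N * (real N - 1) / 2 - B"
  proof -
    have "(\<Sum>j=2..N. \<Sum>k=1..j-1. cos (\<theta> j - \<theta> k)) = (\<Sum>j=2..N. \<Sum>k=1..j-1. (1::real) - h j k)"
      unfolding h_def by simp
    also have "\<dots> = (\<Sum>j=2..N. \<Sum>k=1..j-1. (1::real)) - B"
      unfolding B_def by (simp add: sum_subtractf)
    finally show ?thesis using count_pairs[of N] by simp
  qed
  have PhiC: "Phi n \<theta> = (C - (A + B)) / C"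
  proof -
    have "Phi n \<theta> = (1/C) * ((\<Sum>j=1..N. cos (\<theta> j)) + (\<Sum>j=2..N. \<Sum>k=1..j-1. cos (\<theta> j - \<theta> k)))"
      unfolding Phi_def N_def C_def by simp
    also have "\<dots> = (1/C) * (real N - A + (real N * (real N - 1) / 2 - B))" by (simp only: s1 s2)
    also have "\<dots> = (C - (A + B)) / C" using C Cpos by (simp add: field_simps)
    finally show ?thesis .
  qed
  have Bfull: "B = (1/2) * (\<Sum>j=1..N. \<Sum>k=1..N. h j k)"
    unfolding B_def by (rule D_sym) (auto simp: hsym h_def)
  have "(\<Sum>k=1..N. h m k) \<le> (\<Sum>j=1..N. \<Sum>k=1..N. h j k)"
    using m(1) by (intro member_le_sum) (auto intro: sum_nonneg hnn)
  then have AB: "(\<Sum>k=1..N. (1 - cos (\<theta> k)) / 2 + h m k / 2) \<le> A + B"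
  proof -
    have An: "0 \<le> (\<Sum>k=1..N. 1 - cos (\<theta> k))" by (intro sum_nonneg) simp
    have "(\<Sum>k=1..N. (1 - cos (\<theta> k)) / 2 + h m k / 2) = (\<Sum>k=1..N. 1 - cos (\<theta> k)) / 2 + (\<Sum>k=1..N. h m k) / 2"
      by (simp add: sum.distrib sum_divide_distrib[symmetric])
    then show ?thesis using An Bfull \<open>(\<Sum>k=1..N. h m k) \<le> _\<close> unfolding A_def by linarith
  qed
  have "(\<Sum>k=1..N. (1 - cos (\<theta> m)) / 4) \<le> (\<Sum>k=1..N. (1 - cos (\<theta> k)) / 2 + h m k / 2)"
  proof (intro sum_mono)
    fix k show "(1 - cos (\<theta> m)) / 4 \<le> (1 - cos (\<theta> k)) / 2 + h m k / 2"
    proof -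
      have "(1 - cos (\<theta> m)) / 2 \<le> (1 - cos (\<theta> k)) + h m k"
        using key_ineq[of "\<theta> m" "\<theta> k"] unfolding h_def by simp
      then have "(1 - cos (\<theta> m)) / 2 / 2 \<le> ((1 - cos (\<theta> k)) + h m k) / 2"
        by (rule divide_right_mono) simp
      then show ?thesis by (simp add: add_divide_distrib)
    qed
  qed
  then have AB2: "real N * (1 - cos (\<theta> m)) / 4 \<le> A + B" using AB by simp
  define y where "y = 1 / sqrt (real q)"
  have q0: "real q \<ge> 1" using assms(2) by simp
  have y0: "0 \<le> y" "y \<le> 1" unfolding y_def using q0 by auto
  have y2: "y^2 = 1 / real q" unfolding y_def using q0 by (simp add: power_divide)
  have "cos \<bar>\<theta> m\<bar> \<le> cos y"
  proof (rule cos_monotone_0_pi_le)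
    have "-pi \<le> \<theta> m \<and> \<theta> m \<le> pi" using m(1) assms(3) unfolding N_def by blast
    then show "\<bar>\<theta> m\<bar> \<le> pi" by linarith
    show "0 \<le> y" by (rule y0(1))
    show "y \<le> \<bar>\<theta> m\<bar>" using m(2) unfolding y_def by simp
  qed
  then have "cos (\<theta> m) \<le> cos y" by simp
  then have cm: "1 / (8 * real q) \<le> 1 - cos (\<theta> m)" using cos_lower[OF y0] y2 by simp
  have "real N / (32 * real q) \<le> A + B"
  proof -
    have "real N * (1 / (8 * real q)) \<le> real N * (1 - cos (\<theta> m))"
      using cm by (intro mult_left_mono) auto
    then have "real N * (1 / (8 * real q)) / 4 \<le> real N * (1 - cos (\<theta> m)) / 4"
      by (rule divide_right_mono) simp
    moreover have "real N / (32 * real q) = real N * (1 / (8 * real q)) / 4" by simp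
    ultimately show ?thesis using AB2 by (metis order_trans)
  qed
  then have "real N / (32 * real q) / C \<le> (A + B) / C" using Cpos by (intro divide_right_mono) auto
  moreover have "real N / (32 * real q) / C = 1 / (16 * real q * real n)"
  proof -
    have Np: "real N > 0" "real N + 1 > 0" using N1 by auto
    have qp: "real q > 0" using q0 by simp
    have "real N / (32 * real q) / ((real N + 1) * real N / 2) = 1 / (16 * real q * (real N + 1))"
    proof -
      have "32 * real q * ((real N + 1) * real N / 2) = real N * (16 * real q * (real N + 1))"
        by (simp add: algebra_simps)
      then have "real N / (32 * real q) / ((real N + 1) * real N / 2) = real N / (real N * (16 * real q * (real N + 1)))"
        by (simp only: divide_divide_eq_left)
      also have "\<dots> = 1 / (16 * real q * (real N + 1))" using Np by simp
      finally show ?thesis .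
    qed
    then show ?thesis unfolding C nN .
  qed
  ultimately have "1 / (16 * real q * real n) \<le> (A + B) / C" by simp
  moreover have "1 / (25 * real n * real q) \<le> 1 / (16 * real q * real n)"
  proof -
    have p: "16 * real q * real n > 0" using q0 nN by simp
    have "16 * real q * real n \<le> 25 * real n * real q" using p by simp
    moreover have "real q > 0" "real n > 0" using q0 nN by auto
    ultimately show ?thesis by (intro divide_left_mono) (auto simp: zero_less_mult_iff)
  qed
  ultimately have "1 / (25 * real n * real q) \<le> (A + B) / C" by simp
  moreover have "Phi n \<theta> = 1 - (A + B) / C" using PhiC Cpos by (simp add: diff_divide_distrib)
  ultimately show ?thesis by simp
qed

end
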